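(* Let $(u_0,v_0)=(e_4+e_{13},\,e_6+e_{15})\in\mathcal Z(\mathbb S)$ and let $g$ be the left-invariant metric on $G_2$ defined on $\mathfrak g_2$ by $g(X,Y)=\langle X\cdot(u_0,v_0),\,Y\cdot(u_0,v_0)\rangle_{\mathbb R^{32}}$ (i.e. the pullback of the induced metric of $\mathcal Z(\mathbb S)\subset\mathbb R^{32}$ under the diffeomorphism $h\mapsto h\cdot(u_0,v_0)$). Then $(G_2,g)$ (equivalently $\mathcal Z(\mathbb S)$) has positive Ricci curvature, and its Ricci tensor, as a left-invariant symmetric bilinear form on $\mathfrak g_2$, is $$\mathrm{Ric}=\frac52\sum_{i=0}^2 X^i\otimes X^i+\frac{29}{54}\sum_{i=3}^5 X^i\otimes X^i+\frac56\sum_{i=6}^{13}X^i\otimes X^i .$$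
   Context: Cayley–Dickson algebras: $\mathbb A_0=\mathbb R$, $a^*=a$; $\mathbb A_n=\mathbb A_{n-1}\times\mathbb A_{n-1}$ with $(a,b)(c,d)=(ac-d^*b,\ da+bc^* )$, $(a,b)^*=(a^*,-b)$; canonical basis $e_i=(e_i,0)$, $e_{2^{n-1}+i}=(0,e_i)$ for $0\le i<2^{n-1}$. $\mathbb O=\mathbb A_3$, $\mathbb S=\mathbb A_4\cong\mathbb R^{16}$ (sedenions) with standard inner product. $\mathcal Z(\mathbb S)=\{(u,v)\in\mathbb S\times\mathbb S:\|u\|=\|v\|=\sqrt2,\ uv=0\}$ with metric induced from $\mathbb R^{32}$. $G_2=\mathrm{Aut}(\mathbb O)\subset\mathrm{SO}(8)$ (matrices w.r.t. $e_0,\dots,e_7$), acting on $\mathbb S=\mathbb O\times\mathbb O$ by $h(a,b)=(ha,hb)$ and diagonally on $\mathbb S\times\mathbb S$; this action is simply transitive on $\mathcal Z(\mathbb S)$. Its Lie algebra $\mathfrak g_2\subset\mathfrak{so}(8)$ acts likewise: $X\cdot(a,b)=(Xa,Xb)$. For $0\le i<j\le7$ let $E_{ij}\in\mathfrak{so}(8)$ have $(E_{ij})_{ij}=-1$, $(E_{ij})_{ji}=1$ and all other entries $0$ (rows/columns indexed $0,\dots,7$). The basis $X_0,\dots,X_{13}$ of $\mathfrak g_2$ is: $X_0=\tfrac12(E_{45}+E_{67})$, $X_1=\tfrac12(E_{46}-E_{57})$, $X_2=\tfrac12(E_{47}+E_{56})$, $X_3=-\tfrac{\sqrt3}6(2E_{23}-E_{45}+E_{67})$,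 $X_4=\tfrac{\sqrt3}6(2E_{13}+E_{46}+E_{57})$, $X_5=-\tfrac{\sqrt3}6(2E_{12}-E_{47}+E_{56})$, $X_6=-\tfrac12(E_{17}-E_{24})$, $X_7=\tfrac12(E_{16}+E_{25})$, $X_8=-\tfrac12(E_{15}-E_{26})$, $X_9=\tfrac12(E_{14}+E_{27})$, $X_{10}=\tfrac{\sqrt3}6(E_{16}-E_{25}+2E_{34})$, $X_{11}=\tfrac{\sqrt3}6(E_{17}+E_{24}+2E_{35})$, $X_{12}=-\tfrac{\sqrt3}6(E_{14}-E_{27}-2E_{36})$, $X_{13}=-\tfrac{\sqrt3}6(E_{15}+E_{26}-2E_{37})$; it is orthonormal for $-\mathrm{tr}(XY)$. $X^0,\dots,X^{13}$ denotes the dual basis. *)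

theory Defs
  imports Complex_Main
begin

text \<open>An element of A_n is a function nat => real supported on indices < 2^n
  (coordinates w.r.t. the canonical basis e_0, ..., e_(2^n - 1)).
  (a,b) in A_(n+1) has lower half a (indices < 2^n) and upper half b.\<close>

fun cd_conj :: "nat \<Rightarrow> (nat \<Rightarrow> real) \<Rightarrow> (nat \<Rightarrow> real)" where
  "cd_conj 0 a = (\<lambda>i. if i = 0 then a 0 else 0)"
| "cd_conj (Suc n) a =
     (\<lambda>i. if i < 2^n then cd_conj n a i else if i < 2^Suc n then - a i else 0)"

fun cd_mult :: "nat \<Rightarrow> (nat \<Rightarrow> real) \<Rightarrow> (nat \<Rightarrow> real) \<Rightarrow> (nat \<Rightarrow> real)" where
  "cd_mult 0 x y = (\<lambda>i. if i = 0 then x 0 * y 0 else 0)"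
| "cd_mult (Suc n) x y =
     (let h = (2::nat)^n;
          a = (\<lambda>i. if i < h then x i else 0);
          b = (\<lambda>i. if i < h then x (i + h) else 0);
          c = (\<lambda>i. if i < h then y i else 0);
          d = (\<lambda>i. if i < h then y (i + h) else 0);
          p = (\<lambda>i. cd_mult n a c i - cd_mult n (cd_conj n d) b i);
          q = (\<lambda>i. cd_mult n d a i + cd_mult n b (cd_conj n c) i)
      in (\<lambda>i. if i < h then p i else if i < 2 * h then q (i - h) else 0))"

definition sed_norm :: "(nat \<Rightarrow> real) \<Rightarrow> real" where
  "sed_norm u = sqrt (\<Sum>i<16. (u i)^2)"

definition ZS :: "((nat \<Rightarrow> real) \<times> (nat \<Rightarrow> real)) set" where
  "ZS = {(u, v). (\<forall>i\<ge>16. u i = 0 \<and> v i = 0) \<and> sed_norm u = sqrt 2 \<and> sed_norm v = sqrt 2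
                 \<and> cd_mult 4 u v = (\<lambda>_. 0)}"

definition sed_e :: "nat \<Rightarrow> (nat \<Rightarrow> real)" where
  "sed_e k = (\<lambda>i. if i = k then 1 else 0)"

definition u0 :: "nat \<Rightarrow> real" where "u0 = (\<lambda>i. sed_e 4 i + sed_e 13 i)"
definition v0 :: "nat \<Rightarrow> real" where "v0 = (\<lambda>i. sed_e 6 i + sed_e 15 i)"

type_synonym mat8 = "nat \<Rightarrow> nat \<Rightarrow> real"

definition mzero :: mat8 where "mzero = (\<lambda>_ _. 0)"
definition madd :: "mat8 \<Rightarrow> mat8 \<Rightarrow> mat8" where "madd A B = (\<lambda>i j. A i j + B i j)"
definition msub :: "mat8 \<Rightarrow> mat8 \<Rightarrow> mat8" where "msub A B = (\<lambda>i j. A i j - B i j)"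
definition mscale :: "real \<Rightarrow> mat8 \<Rightarrow> mat8" where "mscale c A = (\<lambda>i j. c * A i j)"
definition mmult :: "mat8 \<Rightarrow> mat8 \<Rightarrow> mat8" where
  "mmult A B = (\<lambda>i j. \<Sum>k<8. A i k * B k j)"
definition mbracket :: "mat8 \<Rightarrow> mat8 \<Rightarrow> mat8" where
  "mbracket A B = msub (mmult A B) (mmult B A)"

definition Emat :: "nat \<Rightarrow> nat \<Rightarrow> mat8" where
  "Emat i j = (\<lambda>r c. if r = i \<and> c = j then -1 else if r = j \<and> c = i then 1 else 0)"

definition g2_basis_list :: "mat8 list" where
  "g2_basis_list =
   [ mscale (1/2) (madd (Emat 4 5) (Emat 6 7)),
     mscale (1/2) (msub (Emat 4 6) (Emat 5 7)),
     mscale (1/2) (madd (Emat 4 7) (Emat 5 6)),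
     mscale (- sqrt 3 / 6) (madd (msub (mscale 2 (Emat 2 3)) (Emat 4 5)) (Emat 6 7)),
     mscale (sqrt 3 / 6) (madd (madd (mscale 2 (Emat 1 3)) (Emat 4 6)) (Emat 5 7)),
     mscale (- sqrt 3 / 6) (madd (msub (mscale 2 (Emat 1 2)) (Emat 4 7)) (Emat 5 6)),
     mscale (- 1/2) (msub (Emat 1 7) (Emat 2 4)),
     mscale (1/2) (madd (Emat 1 6) (Emat 2 5)),
     mscale (- 1/2) (msub (Emat 1 5) (Emat 2 6)),
     mscale (1/2) (madd (Emat 1 4) (Emat 2 7)),
     mscale (sqrt 3 / 6) (madd (msub (Emat 1 6) (Emat 2 5)) (mscale 2 (Emat 3 4))),
     mscale (sqrt 3 / 6) (madd (madd (Emat 1 7) (Emat 2 4)) (mscale 2 (Emat 3 5))),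
     mscale (- sqrt 3 / 6) (msub (msub (Emat 1 4) (Emat 2 7)) (mscale 2 (Emat 3 6))),
     mscale (- sqrt 3 / 6) (msub (madd (Emat 1 5) (Emat 2 6)) (mscale 2 (Emat 3 7))) ]"

definition Xb :: "nat \<Rightarrow> mat8" where "Xb k = g2_basis_list ! k"

definition g2_elem :: "(nat \<Rightarrow> real) \<Rightarrow> mat8" where
  "g2_elem a = (\<lambda>i j. \<Sum>k<14. a k * Xb k i j)"

definition g2 :: "mat8 set" where "g2 = range g2_elem"

text \<open>Dual basis X^k: the k-th coordinate of an element of g_2 in the basis X_0..X_13.\<close>
definition g2_coord :: "nat \<Rightarrow> mat8 \<Rightarrow> real" where
  "g2_coord k M = (THE a. (\<forall>i\<ge>14. a i = 0) \<and> g2_elem a = M) k"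

text \<open>Action of an 8x8 matrix on S = O x O: X(a,b) = (Xa, Xb).\<close>
definition actS :: "mat8 \<Rightarrow> (nat \<Rightarrow> real) \<Rightarrow> (nat \<Rightarrow> real)" where
  "actS M u = (\<lambda>i. if i < 8 then (\<Sum>j<8. M i j * u j)
                   else if i < 16 then (\<Sum>j<8. M (i - 8) j * u (j + 8)) else 0)"

definition gmet :: "mat8 \<Rightarrow> mat8 \<Rightarrow> real" where
  "gmet X Y = (\<Sum>i<16. actS X u0 i * actS Y u0 i) + (\<Sum>i<16. actS X v0 i * actS Y v0 i)"

text \<open>Levi-Civita connection on left-invariant fields, determined by the Koszul formula:
  g(nabla_X Y, Z) = 1/2 (g([X,Y],Z) - g([Y,Z],X) + g([Z,X],Y)).\<close>
definition LC :: "mat8 \<Rightarrow> mat8 \<Rightarrow> mat8" where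
  "LC X Y = (THE W. W \<in> g2 \<and> (\<forall>Z\<in>g2. gmet W Z =
      (1/2) * (gmet (mbracket X Y) Z - gmet (mbracket Y Z) X + gmet (mbracket Z X) Y)))"

definition curv :: "mat8 \<Rightarrow> mat8 \<Rightarrow> mat8 \<Rightarrow> mat8" where
  "curv X Y Z = msub (msub (LC X (LC Y Z)) (LC Y (LC X Z))) (LC (mbracket X Y) Z)"

definition ricci :: "mat8 \<Rightarrow> mat8 \<Rightarrow> real" where
  "ricci Y Z = (\<Sum>k<14. g2_coord k (curv (Xb k) Y Z))"

end

theory Submission
  imports Defs
begin

lemma less14: "(i::nat) < 14 \<Longrightarrow> i = 0 \<or> i = 1 \<or> i = 2 \<or> i = 3 \<or> i = 4 \<or> i = 5 \<or> i = 6 \<or> i = 7 \<or> i = 8 \<or> i = 9 \<or> i = 10 \<or> i = 11 \<or> i = 12 \<or> i = 13"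
  by arith
lemma less8: "(i::nat) < 8 \<Longrightarrow> i = 0 \<or> i = 1 \<or> i = 2 \<or> i = 3 \<or> i = 4 \<or> i = 5 \<or> i = 6 \<or> i = 7"
  by arith

definition Ylist :: "mat8 list" where
  "Ylist = [madd (Emat 4 5) (Emat 6 7), msub (Emat 4 6) (Emat 5 7), madd (Emat 4 7) (Emat 5 6), madd (msub (mscale 2 (Emat 2 3)) (Emat 4 5)) (Emat 6 7), madd (madd (mscale 2 (Emat 1 3)) (Emat 4 6)) (Emat 5 7), madd (msub (mscale 2 (Emat 1 2)) (Emat 4 7)) (Emat 5 6), msub (Emat 1 7) (Emat 2 4), madd (Emat 1 6) (Emat 2 5), msub (Emat 1 5) (Emat 2 6), madd (Emat 1 4) (Emat 2 7), madd (msub (Emat 1 6) (Emat 2 5)) (mscale 2 (Emat 3 4)), madd (madd (Emat 1 7) (Emat 2 4)) (mscale 2 (Emat 3 5)), msub (msub (Emat 1 4) (Emat 2 7)) (mscale 2 (Emat 3 6)), msub (madd (Emat 1 5) (Emat 2 6)) (mscale 2 (Emat 3 7))]"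

definition sfac :: "nat \<Rightarrow> real" where
  "sfac k = [1/2, 1/2, 1/2, - sqrt 3 / 6, sqrt 3 / 6, - sqrt 3 / 6, - 1/2, 1/2, - 1/2, 1/2, sqrt 3 / 6, sqrt 3 / 6, - sqrt 3 / 6, - sqrt 3 / 6] ! k"

definition ymat :: "(nat \<Rightarrow> real) \<Rightarrow> mat8" where
  "ymat x r c = (if r = 0 then (if c = 0 then 0 else (if c = 1 then 0 else (if c = 2 then 0 else (if c = 3 then 0 else (if c = 4 then 0 else (if c = 5 then 0 else (if c = 6 then 0 else (if c = 7 then 0 else 0)))))))) else (if r = 1 then (if c = 0 then 0 else (if c = 1 then 0 else (if c = 2 then (-2) * x 5 else (if c = 3 then (-2) * x 4 else (if c = 4 then - x 9 - x 12 else (if c = 5 then - x 8 - x 13 else (if c = 6 then - x 7 - x 10 else (if c = 7 then - x 6 - x 11 else 0)))))))) else (if r = 2 then (if c = 0 then 0 else (if c = 1 then 2 * x 5 else (if c = 2 then 0 else (if c = 3 then (-2) * x 3 else (if c = 4 then x 6 - x 11 else (if c = 5 then - x 7 + x 10 else (if c = 6 then x 8 - x 13 else (if c = 7 then - x 9 + x 12 else 0)))))))) else (if r = 3 then (if c = 0 then 0 else (if c = 1 then 2 * x 4 else (if c = 2 then 2 * x 3 else (if c = 3 then 0 else (if c = 4 then (-2) * x 10 else (if c = 5 then (-2) * x 11 else (if c = 6 then 2 * x 12 else (if c = 7 then 2 * x 13 else 0)))))))) else (if r = 4 then (if c = 0 then 0 else (if c = 1 then x 9 + x 12 else (if c = 2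 then - x 6 + x 11 else (if c = 3 then 2 * x 10 else (if c = 4 then 0 else (if c = 5 then - x 0 + x 3 else (if c = 6 then - x 1 - x 4 else (if c = 7 then - x 2 + x 5 else 0)))))))) else (if r = 5 then (if c = 0 then 0 else (if c = 1 then x 8 + x 13 else (if c = 2 then x 7 - x 10 else (if c = 3 then 2 * x 11 else (if c = 4 then x 0 - x 3 else (if c = 5 then 0 else (if c = 6 then - x 2 - x 5 else (if c = 7 then x 1 - x 4 else 0)))))))) else (if r = 6 then (if c = 0 then 0 else (if c = 1 then x 7 + x 10 else (if c = 2 then - x 8 + x 13 else (if c = 3 then (-2) * x 12 else (if c = 4 then x 1 + x 4 else (if c = 5 then x 2 + x 5 else (if c = 6 then 0 else (if c = 7 then - x 0 - x 3 else 0)))))))) else (if r = 7 then (if c = 0 then 0 else (if c = 1 then x 6 + x 11 else (if c = 2 then x 9 - x 12 else (if c = 3 then (-2) * x 13 else (if c = 4 then x 2 - x 5 else (if c = 5 then - x 1 + x 4 else (if c = 6 then x 0 + x 3 else (if c = 7 then 0 else 0)))))))) else 0))))))))"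

definition gform :: "(nat \<Rightarrow> real) \<Rightarrow> (nat \<Rightarrow> real) \<Rightarrow> real" where
  "gform x y = (\<Sum>k<14. [4, 4, 4, 4, 4, 4, 2, 2, 2, 2, 6, 6, 6, 6] ! k * x k * y k)"

lemma gform_expl: "gform x y = 4 * x 0 * y 0 + 4 * x 1 * y 1 + 4 * x 2 * y 2 + 4 * x 3 * y 3 + 4 * x 4 * y 4 + 4 * x 5 * y 5 + 2 * x 6 * y 6 + 2 * x 7 * y 7 + 2 * x 8 * y 8 + 2 * x 9 * y 9 + 6 * x 10 * y 10 + 6 * x 11 * y 11 + 6 * x 12 * y 12 + 6 * x 13 * y 13"
  by (simp add: gform_def eval_nat_numeral)

definition brv :: "(nat \<Rightarrow> real) \<Rightarrow> (nat \<Rightarrow> real) \<Rightarrow> (nat \<Rightarrow> real)" where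
  "brv x y m = (if m = 0 then 2 * x 1 * y 2 + (-2) * x 2 * y 1 - x 6 * y 7 + x 7 * y 6 - x 8 * y 9 + x 9 * y 8 + 3 * x 10 * y 11 + (-3) * x 11 * y 10 + 3 * x 12 * y 13 + (-3) * x 13 * y 12 else (if m = 1 then (-2) * x 0 * y 2 + 2 * x 2 * y 0 + x 6 * y 8 - x 7 * y 9 - x 8 * y 6 + x 9 * y 7 + (-3) * x 10 * y 12 + 3 * x 11 * y 13 + 3 * x 12 * y 10 + (-3) * x 13 * y 11 else (if m = 2 then 2 * x 0 * y 1 + (-2) * x 1 * y 0 - x 6 * y 9 - x 7 * y 8 + x 8 * y 7 + x 9 * y 6 + (-3) * x 10 * y 13 + (-3) * x 11 * y 12 + 3 * x 12 * y 11 + 3 * x 13 * y 10 else (if m = 3 then (-2) * x 4 * y 5 + 2 * x 5 * y 4 - x 6 * y 10 + x 7 * y 11 + x 8 * y 12 - x 9 * y 13 + x 10 * y 6 + (-2) * x 10 * y 11 - x 11 * y 7 + 2 * x 11 * y 10 - x 12 * y 8 + 2 * x 12 * y 13 + x 13 * y 9 + (-2) * x 13 * y 12 else (if m = 4 then 2 * x 3 * y 5 + (-2) * x 5 * y 3 - x 6 * y 13 - x 7 * y 12 + x 8 * y 11 + x 9 * y 10 - x 10 * y 9 + (-2) * x 10 * y 12 - x 11 * y 8 + (-2) * x 11 * y 13 + x 12 * y 7 + 2 * x 12 * y 10 + x 13 * y 6 + 2 * x 13 * y 11 else (if m = 5 then (-2) * x 3 * y 4 + 2 * x 4 * y 3 +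 x 6 * y 9 - x 7 * y 8 + x 8 * y 7 - x 9 * y 6 + x 10 * y 13 - x 11 * y 12 + x 12 * y 11 - x 13 * y 10 else (if m = 6 then x 0 * y 7 - x 1 * y 8 + x 2 * y 9 + 3 * x 3 * y 10 + 3 * x 4 * y 13 + (-3) * x 5 * y 9 - x 7 * y 0 + x 8 * y 1 - x 9 * y 2 + 3 * x 9 * y 5 + (-3) * x 10 * y 3 + (-3) * x 13 * y 4 else (if m = 7 then - x 0 * y 6 + x 1 * y 9 + x 2 * y 8 + (-3) * x 3 * y 11 + 3 * x 4 * y 12 + 3 * x 5 * y 8 + x 6 * y 0 - x 8 * y 2 + (-3) * x 8 * y 5 - x 9 * y 1 + 3 * x 11 * y 3 + (-3) * x 12 * y 4 else (if m = 8 then x 0 * y 9 + x 1 * y 6 - x 2 * y 7 + (-3) * x 3 * y 12 + (-3) * x 4 * y 11 + (-3) * x 5 * y 7 - x 6 * y 1 + x 7 * y 2 + 3 * x 7 * y 5 - x 9 * y 0 + 3 * x 11 * y 4 + 3 * x 12 * y 3 else (if m = 9 then - x 0 * y 8 - x 1 * y 7 - x 2 * y 6 + 3 * x 3 * y 13 + (-3) * x 4 * y 10 + 3 * x 5 * y 6 + x 6 * y 2 + (-3) * x 6 * y 5 + x 7 * y 1 + x 8 * y 0 + 3 * x 10 * y 4 + (-3) * x 13 * y 3 else (if m = 10 then - x 0 * y 11 + x 1 * y 12 + x 2 * y 13 - x 3 * y 6 + 2 * x 3 * y 11 + x 4 * y 9 + 2 * x 4 * y 12 - x 5 * y 13 +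 x 6 * y 3 - x 9 * y 4 + x 11 * y 0 + (-2) * x 11 * y 3 - x 12 * y 1 + (-2) * x 12 * y 4 - x 13 * y 2 + x 13 * y 5 else (if m = 11 then x 0 * y 10 - x 1 * y 13 + x 2 * y 12 + x 3 * y 7 + (-2) * x 3 * y 10 + x 4 * y 8 + 2 * x 4 * y 13 + x 5 * y 12 - x 7 * y 3 - x 8 * y 4 - x 10 * y 0 + 2 * x 10 * y 3 - x 12 * y 2 - x 12 * y 5 + x 13 * y 1 + (-2) * x 13 * y 4 else (if m = 12 then - x 0 * y 13 - x 1 * y 10 - x 2 * y 11 + x 3 * y 8 + (-2) * x 3 * y 13 - x 4 * y 7 + (-2) * x 4 * y 10 - x 5 * y 11 + x 7 * y 4 - x 8 * y 3 + x 10 * y 1 + 2 * x 10 * y 4 + x 11 * y 2 + x 11 * y 5 + x 13 * y 0 + 2 * x 13 * y 3 else (if m = 13 then x 0 * y 12 + x 1 * y 11 - x 2 * y 10 - x 3 * y 9 + 2 * x 3 * y 12 - x 4 * y 6 + (-2) * x 4 * y 11 + x 5 * y 10 + x 6 * y 4 + x 9 * y 3 + x 10 * y 2 - x 10 * y 5 - x 11 * y 1 + 2 * x 11 * y 4 - x 12 * y 0 + (-2) * x 12 * y 3 else 0))))))))))))))"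

definition lcv :: "(nat \<Rightarrow> real) \<Rightarrow> (nat \<Rightarrow> real) \<Rightarrow> (nat \<Rightarrow> real)" where
  "lcv x y m = (if m = 0 then x 1 * y 2 - x 2 * y 1 + (-1/2) * x 6 * y 7 + (1/2) * x 7 * y 6 + (-1/2) * x 8 * y 9 + (1/2) * x 9 * y 8 + (3/2) * x 10 * y 11 + (-3/2) * x 11 * y 10 + (3/2) * x 12 * y 13 + (-3/2) * x 13 * y 12 else (if m = 1 then - x 0 * y 2 + x 2 * y 0 + (1/2) * x 6 * y 8 + (-1/2) * x 7 * y 9 + (-1/2) * x 8 * y 6 + (1/2) * x 9 * y 7 + (-3/2) * x 10 * y 12 + (3/2) * x 11 * y 13 + (3/2) * x 12 * y 10 + (-3/2) * x 13 * y 11 else (if m = 2 then x 0 * y 1 - x 1 * y 0 + (-1/2) * x 6 * y 9 + (-1/2) * x 7 * y 8 + (1/2) * x 8 * y 7 + (1/2) * x 9 * y 6 + (-3/2) * x 10 * y 13 + (-3/2) * x 11 * y 12 + (3/2) * x 12 * y 11 + (3/2) * x 13 * y 10 else (if m = 3 then - x 4 * y 5 + x 5 * y 4 + (-1/2) * x 6 * y 10 + (1/2) * x 7 * y 11 + (1/2) * x 8 * y 12 + (-1/2) * x 9 * y 13 + (1/2) * x 10 * y 6 - x 10 * y 11 + (-1/2) * x 11 * y 7 + x 11 * y 10 + (-1/2) * x 12 * y 8 + x 12 * y 13 + (1/2) * x 13 * y 9 - x 13 * y 12 else (if m = 4 then x 3 * y 5 - x 5 * y 3 + (-1/2) * x 6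 * y 13 + (-1/2) * x 7 * y 12 + (1/2) * x 8 * y 11 + (1/2) * x 9 * y 10 + (-1/2) * x 10 * y 9 - x 10 * y 12 + (-1/2) * x 11 * y 8 - x 11 * y 13 + (1/2) * x 12 * y 7 + x 12 * y 10 + (1/2) * x 13 * y 6 + x 13 * y 11 else (if m = 5 then - x 3 * y 4 + x 4 * y 3 + (1/2) * x 6 * y 9 + (-1/2) * x 7 * y 8 + (1/2) * x 8 * y 7 + (-1/2) * x 9 * y 6 + (1/2) * x 10 * y 13 + (-1/2) * x 11 * y 12 + (1/2) * x 12 * y 11 + (-1/2) * x 13 * y 10 else (if m = 6 then 2 * x 3 * y 10 + 2 * x 4 * y 13 + (-2) * x 5 * y 9 - x 7 * y 0 + x 8 * y 1 - x 9 * y 2 + x 9 * y 5 - x 10 * y 3 - x 13 * y 4 else (if m = 7 then (-2) * x 3 * y 11 + 2 * x 4 * y 12 + 2 * x 5 * y 8 + x 6 * y 0 - x 8 * y 2 - x 8 * y 5 - x 9 * y 1 + x 11 * y 3 - x 12 * y 4 else (if m = 8 then (-2) * x 3 * y 12 + (-2) * x 4 * y 11 + (-2) * x 5 * y 7 - x 6 * y 1 + x 7 * y 2 + x 7 * y 5 - x 9 * y 0 + x 11 * y 4 + x 12 * y 3 else (if m = 9 then 2 * x 3 * y 13 + (-2) * x 4 * y 10 + 2 * x 5 * y 6 + x 6 * y 2 - x 6 * y 5 + x 7 * y 1 + x 8 * y 0 + x 10 * y 4 - x 13 * y 3 else (if m = 10 then (-2/3) * x 3 * y 6 + (4/3) *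 x 3 * y 11 + (2/3) * x 4 * y 9 + (4/3) * x 4 * y 12 + (-2/3) * x 5 * y 13 + (1/3) * x 6 * y 3 + (-1/3) * x 9 * y 4 + x 11 * y 0 + (-2/3) * x 11 * y 3 - x 12 * y 1 + (-2/3) * x 12 * y 4 - x 13 * y 2 + (1/3) * x 13 * y 5 else (if m = 11 then (2/3) * x 3 * y 7 + (-4/3) * x 3 * y 10 + (2/3) * x 4 * y 8 + (4/3) * x 4 * y 13 + (2/3) * x 5 * y 12 + (-1/3) * x 7 * y 3 + (-1/3) * x 8 * y 4 - x 10 * y 0 + (2/3) * x 10 * y 3 - x 12 * y 2 + (-1/3) * x 12 * y 5 + x 13 * y 1 + (-2/3) * x 13 * y 4 else (if m = 12 then (2/3) * x 3 * y 8 + (-4/3) * x 3 * y 13 + (-2/3) * x 4 * y 7 + (-4/3) * x 4 * y 10 + (-2/3) * x 5 * y 11 + (1/3) * x 7 * y 4 + (-1/3) * x 8 * y 3 + x 10 * y 1 + (2/3) * x 10 * y 4 + x 11 * y 2 + (1/3) * x 11 * y 5 + x 13 * y 0 + (2/3) * x 13 * y 3 else (if m = 13 then (-2/3) * x 3 * y 9 + (4/3) * x 3 * y 12 + (-2/3) * x 4 * y 6 + (-4/3) * x 4 * y 11 + (2/3) * x 5 * y 10 + (1/3) * x 6 * y 4 + (1/3) * x 9 * y 3 + x 10 * y 2 + (-1/3) * x 10 * y 5 - x 11 * y 1 + (2/3) * x 11 * y 4 - x 12 * y 0 + (-2/3) * x 12 * y 3 else 0))))))))))))))"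

definition Yb :: "nat \<Rightarrow> mat8" where "Yb k = Ylist ! k"

lemma Xb_Yb: "k < 14 \<Longrightarrow> Xb k = mscale (sfac k) (Yb k)"
  by (drule less14) (elim disjE; simp add: Xb_def g2_basis_list_def Yb_def Ylist_def sfac_def)

definition yel :: "(nat \<Rightarrow> real) \<Rightarrow> mat8" where
  "yel x = (\<lambda>i j. \<Sum>k<14. x k * Yb k i j)"

lemma Yb_out: "k < 14 \<Longrightarrow> \<not> (r < 8 \<and> c < 8) \<Longrightarrow> Yb k r c = 0"
  by (drule less14) (elim disjE; auto simp add: Yb_def Ylist_def madd_def msub_def mscale_def Emat_def)

lemma ymat_out: "\<not> (r < 8 \<and> c < 8) \<Longrightarrow> ymat x r c = 0"
  unfolding ymat_def by auto

lemma yel_ymat: "yel x = ymat x"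
proof (intro ext)
  fix r c :: nat
  show "yel x r c = ymat x r c"
  proof (cases "r < 8 \<and> c < 8")
    case True
    then have r: "r < 8" and c: "c < 8" by auto
    show ?thesis using less8[OF r] less8[OF c]
      by (elim disjE; simp add: yel_def ymat_def Yb_def Ylist_def eval_nat_numeral madd_def msub_def mscale_def Emat_def)
  next
    case False
    then have "yel x r c = 0" unfolding yel_def by (intro sum.neutral) (simp add: Yb_out)
    moreover have "ymat x r c = 0" using False by (rule ymat_out)
    ultimately show ?thesis by simp
  qed
qed



lemma g2_elem_yel: "g2_elem a = yel (\<lambda>k. sfac k * a k)"
  unfolding g2_elem_def yel_def
  by (intro ext sum.cong refl) (simp add: Xb_Yb mscale_def)

lemma gmet_gen: "gmet X Y = (\<Sum>i<8. X i 4 * Y i 4 + X i 5 * Y i 5 + X i 6 * Y i 6 + X i 7 * Y i 7)"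
  by (simp add: gmet_def actS_def u0_def v0_def sed_e_def eval_nat_numeral)

lemma gmet_yel: "gmet (yel x) (yel y) = gform x y"
  by (simp add: gmet_gen yel_ymat ymat_def gform_expl eval_nat_numeral algebra_simps)

lemma bracket_yel: "mbracket (yel x) (yel y) = yel (brv x y)"
proof (intro ext)
  fix r c :: nat
  show "mbracket (yel x) (yel y) r c = yel (brv x y) r c"
  proof (cases "r < 8 \<and> c < 8")
    case True
    then have r: "r < 8" and c: "c < 8" by auto
    show ?thesis using less8[OF r] less8[OF c]
      by (elim disjE; simp add: yel_ymat mbracket_def msub_def mmult_def ymat_def brv_def eval_nat_numeral algebra_simps)
  next
    case False
    then have "mmult (yel x) (yel y) r c = 0" "mmult (yel y) (yel x) r c = 0" "yel (brv x y) r c = 0"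
      by (auto simp: mmult_def yel_ymat ymat_out)
    then show ?thesis by (simp add: mbracket_def msub_def)
  qed
qed



lemma koszul: "gform (lcv x y) z = 1/2 * (gform (brv x y) z - gform (brv y z) x + gform (brv z x) y)"
  unfolding gform_expl by (simp add: lcv_def brv_def; algebra)

lemma gform_inj:
  assumes "\<forall>k<14. gform x (\<lambda>i. if i = k then 1 else 0) = gform y (\<lambda>i. if i = k then 1 else 0)"
  shows "\<forall>k<14. x k = y k"
proof (intro allI impI)
  fix k :: nat assume k: "k < 14"
  have "gform x (\<lambda>i. if i = k then 1 else 0) = gform y (\<lambda>i. if i = k then 1 else 0)"
    using assms k by blast
  then show "x k = y k" using less14[OF k]
    by (elim disjE; simp add: gform_expl)
qed

lemma yel_cong: "(\<And>k. k < 14 \<Longrightarrow> x k = y k) \<Longrightarrow> yel x = yel y"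
  unfolding yel_def by (intro ext sum.cong) auto

lemma sfac_nz: "k < 14 \<Longrightarrow> sfac k \<noteq> 0"
  by (drule less14) (elim disjE; simp add: sfac_def)

lemma yel_in_g2: "yel w \<in> g2"
proof -
  have "yel w = g2_elem (\<lambda>k. w k / sfac k)"
    unfolding g2_elem_yel by (rule yel_cong) (simp add: sfac_nz)
  then show ?thesis unfolding g2_def by blast
qed

lemma g2_yel: "Z \<in> g2 \<Longrightarrow> \<exists>z. Z = yel z"
  unfolding g2_def using g2_elem_yel by blast

lemma yel_inj: "yel x = yel y \<Longrightarrow> \<forall>k<14. x k = y k"
  by (rule gform_inj) (metis gmet_yel)

lemma LC_yel: "LC (yel x) (yel y) = yel (lcv x y)"
  unfolding LC_def
proof (rule the_equality)
  have P: "\<forall>Z\<in>g2. gmet (yel (lcv x y)) Z =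
      (1/2) * (gmet (mbracket (yel x) (yel y)) Z - gmet (mbracket (yel y) Z) (yel x) + gmet (mbracket Z (yel x)) (yel y))"
  proof
    fix Z assume "Z \<in> g2"
    then obtain z where z: "Z = yel z" using g2_yel by blast
    show "gmet (yel (lcv x y)) Z =
      (1/2) * (gmet (mbracket (yel x) (yel y)) Z - gmet (mbracket (yel y) Z) (yel x) + gmet (mbracket Z (yel x)) (yel y))"
      unfolding z bracket_yel gmet_yel by (rule koszul)
  qed
  then show "yel (lcv x y) \<in> g2 \<and> (\<forall>Z\<in>g2. gmet (yel (lcv x y)) Z =
      (1/2) * (gmet (mbracket (yel x) (yel y)) Z - gmet (mbracket (yel y) Z) (yel x) + gmet (mbracket Z (yel x)) (yel y)))"
    using yel_in_g2 by blast
  fix W assume W: "W \<in> g2 \<and> (\<forall>Z\<in>g2. gmet W Z =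
      (1/2) * (gmet (mbracket (yel x) (yel y)) Z - gmet (mbracket (yel y) Z) (yel x) + gmet (mbracket Z (yel x)) (yel y)))"
  then obtain w where w: "W = yel w" using g2_yel by blast
  have "\<forall>k<14. gform w (\<lambda>i. if i = k then 1 else 0) = gform (lcv x y) (\<lambda>i. if i = k then 1 else 0)"
  proof (intro allI impI)
    fix k :: nat
    let ?e = "\<lambda>i. if i = k then (1::real) else 0"
    have e: "yel ?e \<in> g2" by (rule yel_in_g2)
    have "gmet W (yel ?e) = gmet (yel (lcv x y)) (yel ?e)"
      using bspec[OF conjunct2[OF W] e] bspec[OF P e] by simp
    then show "gform w ?e = gform (lcv x y) ?e" unfolding w gmet_yel .
  qed
  then have "\<forall>k<14. w k = lcv x y k" by (rule gform_inj)
  then show "W = yel (lcv x y)" unfolding w by (intro yel_cong) auto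
qed

lemma msub_yel: "msub (yel p) (yel q) = yel (\<lambda>k. p k - q k)"
  unfolding msub_def yel_def by (intro ext) (simp add: sum_subtractf[symmetric] left_diff_distrib)

definition curvv :: "(nat \<Rightarrow> real) \<Rightarrow> (nat \<Rightarrow> real) \<Rightarrow> (nat \<Rightarrow> real) \<Rightarrow> (nat \<Rightarrow> real)" where
  "curvv a b c = (\<lambda>m. lcv a (lcv b c) m - lcv b (lcv a c) m - lcv (brv a b) c m)"

lemma curv_yel: "curv (yel a) (yel b) (yel c) = yel (curvv a b c)"
  unfolding curv_def LC_yel bracket_yel msub_yel curvv_def ..

definition Rpol :: "nat \<Rightarrow> (nat \<Rightarrow> real) \<Rightarrow> (nat \<Rightarrow> real) \<Rightarrow> real" where
  "Rpol k p q = (if k = 0 then p 1 * q 1 + p 2 * q 2 + (1/2) * p 6 * q 6 + (1/2) * p 7 * q 7 + (1/2) * p 8 * q 8 + (1/2) * p 9 * q 9 + (3/2) * p 10 * q 10 + (3/2) * p 11 * q 11 + (3/2) * p 12 * q 12 + (3/2) * p 13 * q 13 else (if k = 1 then p 0 * q 0 + p 2 * q 2 + (1/2) * p 6 * q 6 + (1/2) * p 7 * q 7 + (1/2) * p 8 * q 8 + (1/2) * p 9 * q 9 + (3/2) * p 10 * q 10 + (3/2) * p 11 * q 11 + (3/2) * p 12 * q 12 + (3/2) * p 13 * q 13 else (if k = 2 then p 0 * q 0 + p 1 * q 1 + (1/2) * p 6 * q 6 + (1/2) * p 7 * q 7 + (1/2) * p 8 * q 8 + (1/2) * p 9 * q 9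 + (3/2) * p 10 * q 10 + (3/2) * p 11 * q 11 + (3/2) * p 12 * q 12 + (3/2) * p 13 * q 13 else (if k = 3 then p 4 * q 4 + p 5 * q 5 + (1/6) * p 6 * q 6 + (-1/3) * p 6 * q 11 + (1/6) * p 7 * q 7 + (-1/3) * p 7 * q 10 + (1/6) * p 8 * q 8 + (-1/3) * p 8 * q 13 + (1/6) * p 9 * q 9 + (-1/3) * p 9 * q 12 + (-1/3) * p 10 * q 7 + (7/6) * p 10 * q 10 + (-1/3) * p 11 * q 6 + (7/6) * p 11 * q 11 + (-1/3) * p 12 * q 9 + (7/6) * p 12 * q 12 + (-1/3) * p 13 * q 8 + (7/6) * p 13 * q 13 else (if k = 4 then p 3 * q 3 + p 5 * q 5 + (1/6) * p 6 * q 6 + (1/3) * p 6 * q 11 + (1/6) * p 7 * q 7 + (1/3) * p 7 * q 10 + (1/6) * p 8 * q 8 + (1/3) * p 8 * q 13 + (1/6) * p 9 * q 9 + (1/3) * p 9 * q 12 + (1/3) * p 10 * q 7 + (7/6) * p 10 * q 10 + (1/3) * p 11 * q 6 + (7/6) * p 11 * q 11 + (1/3) * p 12 * q 9 + (7/6) * p 12 * q 12 + (1/3) * p 13 * q 8 + (7/6) * p 13 * q 13 else (if k = 5 then p 3 * q 3 + p 4 * q 4 + (1/2) * p 6 * q 6 + (1/2) * p 7 * q 7 + (1/2) * p 8 * q 8 + (1/2) * p 9 * q 9 + (1/6) * p 10 * q 10 + (1/6) * p 11 * q 11 + (1/6) * p 12 * q 12 + (1/6) * p 13 * q 13 else (if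 k = 6 then p 0 * q 0 + p 1 * q 1 + p 2 * q 2 - p 2 * q 5 + (1/3) * p 3 * q 3 + (1/3) * p 4 * q 4 - p 5 * q 2 + p 5 * q 5 + (-1/2) * p 7 * q 7 + (-1/2) * p 8 * q 8 + p 9 * q 9 + (3/2) * p 10 * q 10 + (3/2) * p 13 * q 13 else (if k = 7 then p 0 * q 0 + p 1 * q 1 + p 2 * q 2 + p 2 * q 5 + (1/3) * p 3 * q 3 + (1/3) * p 4 * q 4 + p 5 * q 2 + p 5 * q 5 + (-1/2) * p 6 * q 6 + p 8 * q 8 + (-1/2) * p 9 * q 9 + (3/2) * p 11 * q 11 + (3/2) * p 12 * q 12 else (if k = 8 then p 0 * q 0 + p 1 * q 1 + p 2 * q 2 + p 2 * q 5 + (1/3) * p 3 * q 3 + (1/3) * p 4 * q 4 + p 5 * q 2 + p 5 * q 5 + (-1/2) * p 6 * q 6 + p 7 * q 7 + (-1/2) * p 9 * q 9 + (3/2) * p 11 * q 11 + (3/2) * p 12 * q 12 else (if k = 9 then p 0 * q 0 + p 1 * q 1 + p 2 * q 2 - p 2 * q 5 + (1/3) * p 3 * q 3 + (1/3) * p 4 * q 4 - p 5 * q 2 + p 5 * q 5 + p 6 * q 6 + (-1/2) * p 7 * q 7 + (-1/2) * p 8 * q 8 + (3/2) * p 10 * q 10 + (3/2) * p 13 * q 13 else (if k = 10 then p 0 * q 0 + (-2/3) * p 0 * q 3 + p 1 * q 1 + (2/3) * p 1 * q 4 + p 2 * q 2 + (-1/3) * p 2 * q 5 + (-2/3) * p 3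 * q 0 + (7/9) * p 3 * q 3 + (2/3) * p 4 * q 1 + (7/9) * p 4 * q 4 + (-1/3) * p 5 * q 2 + (1/9) * p 5 * q 5 + (1/2) * p 6 * q 6 - p 6 * q 11 + (1/2) * p 9 * q 9 + p 9 * q 12 - p 11 * q 6 + (1/2) * p 11 * q 11 + p 12 * q 9 + (1/2) * p 12 * q 12 - p 13 * q 13 else (if k = 11 then p 0 * q 0 + (-2/3) * p 0 * q 3 + p 1 * q 1 + (-2/3) * p 1 * q 4 + p 2 * q 2 + (1/3) * p 2 * q 5 + (-2/3) * p 3 * q 0 + (7/9) * p 3 * q 3 + (-2/3) * p 4 * q 1 + (7/9) * p 4 * q 4 + (1/3) * p 5 * q 2 + (1/9) * p 5 * q 5 + (1/2) * p 7 * q 7 - p 7 * q 10 + (1/2) * p 8 * q 8 + p 8 * q 13 - p 10 * q 7 + (1/2) * p 10 * q 10 - p 12 * q 12 + p 13 * q 8 + (1/2) * p 13 * q 13 else (if k = 12 then p 0 * q 0 + (2/3) * p 0 * q 3 + p 1 * q 1 + (2/3) * p 1 * q 4 + p 2 * q 2 + (1/3) * p 2 * q 5 + (2/3) * p 3 * q 0 + (7/9) * p 3 * q 3 + (2/3) * p 4 * q 1 + (7/9) * p 4 * q 4 + (1/3) * p 5 * q 2 + (1/9) * p 5 * q 5 + (1/2) * p 7 * q 7 + p 7 * q 10 + (1/2) * p 8 * q 8 - p 8 * q 13 + p 10 * q 7 + (1/2) * p 10 * q 10 - p 11 * q 11 - p 13 * q 8 + (1/2) * p 13 * q 13 else (if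 k = 13 then p 0 * q 0 + (2/3) * p 0 * q 3 + p 1 * q 1 + (-2/3) * p 1 * q 4 + p 2 * q 2 + (-1/3) * p 2 * q 5 + (2/3) * p 3 * q 0 + (7/9) * p 3 * q 3 + (-2/3) * p 4 * q 1 + (7/9) * p 4 * q 4 + (-1/3) * p 5 * q 2 + (1/9) * p 5 * q 5 + (1/2) * p 6 * q 6 + p 6 * q 11 + (1/2) * p 9 * q 9 - p 9 * q 12 - p 10 * q 10 + p 11 * q 6 + (1/2) * p 11 * q 11 - p 12 * q 9 + (1/2) * p 12 * q 12 else 0))))))))))))))"

lemma curvv_0: "curvv (\<lambda>i. if i = 0 then t else 0) p q 0 = t * Rpol 0 p q"
  by (simp add: curvv_def lcv_def brv_def Rpol_def algebra_simps)

lemma curvv_1: "curvv (\<lambda>i. if i = 1 then t else 0) p q 1 = t * Rpol 1 p q"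
  by (simp add: curvv_def lcv_def brv_def Rpol_def algebra_simps)

lemma curvv_2: "curvv (\<lambda>i. if i = 2 then t else 0) p q 2 = t * Rpol 2 p q"
  by (simp add: curvv_def lcv_def brv_def Rpol_def algebra_simps)

lemma curvv_3: "curvv (\<lambda>i. if i = 3 then t else 0) p q 3 = t * Rpol 3 p q"
  by (simp add: curvv_def lcv_def brv_def Rpol_def algebra_simps)

lemma curvv_4: "curvv (\<lambda>i. if i = 4 then t else 0) p q 4 = t * Rpol 4 p q"
  by (simp add: curvv_def lcv_def brv_def Rpol_def algebra_simps)

lemma curvv_5: "curvv (\<lambda>i. if i = 5 then t else 0) p q 5 = t * Rpol 5 p q"
  by (simp add: curvv_def lcv_def brv_def Rpol_def algebra_simps)

lemma curvv_6: "curvv (\<lambda>i. if i = 6 then t else 0) p q 6 = t * Rpol 6 p q"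
  by (simp add: curvv_def lcv_def brv_def Rpol_def algebra_simps)

lemma curvv_7: "curvv (\<lambda>i. if i = 7 then t else 0) p q 7 = t * Rpol 7 p q"
  by (simp add: curvv_def lcv_def brv_def Rpol_def algebra_simps)

lemma curvv_8: "curvv (\<lambda>i. if i = 8 then t else 0) p q 8 = t * Rpol 8 p q"
  by (simp add: curvv_def lcv_def brv_def Rpol_def algebra_simps)

lemma curvv_9: "curvv (\<lambda>i. if i = 9 then t else 0) p q 9 = t * Rpol 9 p q"
  by (simp add: curvv_def lcv_def brv_def Rpol_def algebra_simps)

lemma curvv_10: "curvv (\<lambda>i. if i = 10 then t else 0) p q 10 = t * Rpol 10 p q"
  by (simp add: curvv_def lcv_def brv_def Rpol_def algebra_simps)

lemma curvv_11: "curvv (\<lambda>i. if i = 11 then t else 0) p q 11 = t * Rpol 11 p q"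
  by (simp add: curvv_def lcv_def brv_def Rpol_def algebra_simps)

lemma curvv_12: "curvv (\<lambda>i. if i = 12 then t else 0) p q 12 = t * Rpol 12 p q"
  by (simp add: curvv_def lcv_def brv_def Rpol_def algebra_simps)

lemma curvv_13: "curvv (\<lambda>i. if i = 13 then t else 0) p q 13 = t * Rpol 13 p q"
  by (simp add: curvv_def lcv_def brv_def Rpol_def algebra_simps)

lemma Rsum: "(\<Sum>k<14. Rpol k p q) = 10 * (p 0 * q 0) + 10 * (p 1 * q 1) + 10 * (p 2 * q 2) + (58/9) * (p 3 * q 3) + (58/9) * (p 4 * q 4) + (58/9) * (p 5 * q 5) + (10/3) * (p 6 * q 6) + (10/3) * (p 7 * q 7) + (10/3) * (p 8 * q 8) + (10/3) * (p 9 * q 9) + 10 * (p 10 * q 10) + 10 * (p 11 * q 11) + 10 * (p 12 * q 12) + 10 * (p 13 * q 13)"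
  by (simp add: Rpol_def eval_nat_numeral; simp add: field_simps; algebra)


lemma curvv_e: "k < 14 \<Longrightarrow> curvv (\<lambda>i. if i = k then t else 0) p q k = t * Rpol k p q"
  by (drule less14) (elim disjE; simp only: curvv_0 curvv_1 curvv_2 curvv_3 curvv_4 curvv_5 curvv_6
      curvv_7 curvv_8 curvv_9 curvv_10 curvv_11 curvv_12 curvv_13)

lemma Xb_yel: "k < 14 \<Longrightarrow> Xb k = yel (\<lambda>i. if i = k then sfac k else 0)"
proof (intro ext)
  fix i j assume k: "k < 14"
  have "(\<Sum>ka<14. (if ka = k then sfac k else 0) * Yb ka i j) = (\<Sum>ka<14. if ka = k then sfac k * Yb ka i j else 0)"
    by (rule sum.cong) auto
  also have "\<dots> = sfac k * Yb k i j" using k by (simp add: sum.delta)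
  finally show "Xb k i j = yel (\<lambda>i. if i = k then sfac k else 0) i j"
    unfolding yel_def using k by (simp add: Xb_Yb mscale_def)
qed

lemma g2_coord_yel:
  assumes k: "k < 14"
  shows "g2_coord k (yel w) = w k / sfac k"
proof -
  define a0 where "a0 = (\<lambda>i. if i < 14 then w i / sfac i else 0)"
  have P: "(\<forall>i\<ge>14. a0 i = 0) \<and> g2_elem a0 = yel w"
    unfolding a0_def g2_elem_yel by (auto intro!: yel_cong simp: sfac_nz)
  have "(THE a. (\<forall>i\<ge>14. a i = 0) \<and> g2_elem a = yel w) = a0"
  proof (rule the_equality)
    show "(\<forall>i\<ge>14. a0 i = 0) \<and> g2_elem a0 = yel w" by (rule P)
  next
    fix a assume A: "(\<forall>i\<ge>14. a i = 0) \<and> g2_elem a = yel w"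
    then have "yel (\<lambda>k. sfac k * a k) = yel (\<lambda>k. sfac k * a0 k)" using P by (simp add: g2_elem_yel)
    then have "\<forall>k<14. sfac k * a k = sfac k * a0 k" by (rule yel_inj)
    then show "a = a0" using A a0_def sfac_nz by (intro ext) (metis mult_left_cancel not_le)
  qed
  then show ?thesis unfolding g2_coord_def a0_def using k by simp
qed

lemma ricci_Rpol: "ricci (g2_elem a) (g2_elem b) = (\<Sum>k<14. Rpol k (\<lambda>k. sfac k * a k) (\<lambda>k. sfac k * b k))"
  unfolding ricci_def
proof (rule sum.cong[OF refl])
  fix k assume "k \<in> {..<14::nat}"
  then have k: "k < 14" by simp
  show "g2_coord k (curv (Xb k) (g2_elem a) (g2_elem b)) = Rpol k (\<lambda>k. sfac k * a k) (\<lambda>k. sfac k * b k)"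
    unfolding Xb_yel[OF k] g2_elem_yel curv_yel g2_coord_yel[OF k] curvv_e[OF k]
    using sfac_nz[OF k] by simp
qed

lemma sfac_sq: "sfac k * x * (sfac k * y) = sfac k ^ 2 * (x * y)"
  by (simp add: algebra_simps power2_eq_square)

lemma sfac_sq_vals: "sfac 0 ^ 2 = 1/4" "sfac 1 ^ 2 = 1/4" "sfac 2 ^ 2 = 1/4" "sfac 3 ^ 2 = 1/12"
  "sfac 4 ^ 2 = 1/12" "sfac 5 ^ 2 = 1/12" "sfac 6 ^ 2 = 1/4" "sfac 7 ^ 2 = 1/4" "sfac 8 ^ 2 = 1/4"
  "sfac 9 ^ 2 = 1/4" "sfac 10 ^ 2 = 1/12" "sfac 11 ^ 2 = 1/12" "sfac 12 ^ 2 = 1/12" "sfac 13 ^ 2 = 1/12"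
  by (simp_all add: sfac_def power_divide power2_eq_square)

lemma ricci_formula: "ricci (g2_elem a) (g2_elem b) =
          5/2 * (\<Sum>i<3. a i * b i)
        + 29/54 * (\<Sum>i\<in>{3..<6}. a i * b i)
        + 5/6 * (\<Sum>i\<in>{6..<14}. a i * b i)"
  unfolding ricci_Rpol Rsum sfac_sq sfac_sq_vals
  by (simp add: eval_nat_numeral atLeastLessThanSuc; simp add: field_simps; algebra)


lemma less16: "(i::nat) < 16 \<Longrightarrow> i = 0 \<or> i = 1 \<or> i = 2 \<or> i = 3 \<or> i = 4 \<or> i = 5 \<or> i = 6 \<or> i = 7 \<or> i = 8 \<or> i = 9 \<or> i = 10 \<or> i = 11 \<or> i = 12 \<or> i = 13 \<or> i = 14 \<or> i = 15"
  by arith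

lemma cdm: "cd_mult 4 u0 v0 = (\<lambda>_. 0)"
proof
  fix i :: nat
  show "cd_mult 4 u0 v0 i = 0"
  proof (cases "i < 16")
    case True
    then show ?thesis using less16[OF True]
      by (elim disjE) (simp_all add: eval_nat_numeral Let_def u0_def v0_def sed_e_def)
  next
    case False
    then show ?thesis by (simp add: eval_nat_numeral Let_def)
  qed
qed

lemma u0v0_ZS: "(u0, v0) \<in> ZS"
  unfolding ZS_def using cdm
  by (simp add: sed_norm_def u0_def v0_def sed_e_def eval_nat_numeral)

lemma ricci_pos:
  assumes X: "X \<in> g2" and nz: "X \<noteq> mzero"
  shows "ricci X X > 0"
proof -
  obtain a where a: "X = g2_elem a" using X unfolding g2_def by blast
  define c :: "nat \<Rightarrow> real" where "c k = (if k < 3 then 5/2 else if k < 6 then 29/54 else 5/6)" for k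
  have eq: "ricci X X = (\<Sum>k<14. c k * (a k * a k))"
    unfolding a ricci_formula c_def by (simp add: eval_nat_numeral atLeastLessThanSuc; simp add: field_simps; algebra)
  obtain j where j: "j < 14" "a j \<noteq> 0"
  proof (rule ccontr)
    assume "\<not> thesis"
    with that have "\<forall>j<14. a j = 0" by blast
    then have "g2_elem a = mzero" unfolding g2_elem_def mzero_def by (intro ext) simp
    with nz a show False by simp
  qed
  have cpos: "c k > 0" for k unfolding c_def by simp
  have "0 < (\<Sum>k<14. c k * (a k * a k))"
  proof (rule sum_pos2[of _ j])
    show "0 < c j * (a j * a j)" using j cpos[of j] by (metis mult_pos_pos not_real_square_gt_zero)
  next
    fix i assume "i \<in> {..<14::nat}"
    show "0 \<le> c i * (a i * a i)" by (metis cpos less_imp_le mult_nonneg_nonneg zero_le_square)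
  qed (use j in auto)
  then show ?thesis using eq by simp
qed

theorem mainTheorem2:
  shows "(u0, v0) \<in> ZS
    \<and> (\<forall>X\<in>g2. X \<noteq> mzero \<longrightarrow> ricci X X > 0)
    \<and> (\<forall>a b. ricci (g2_elem a) (g2_elem b) =
          5/2 * (\<Sum>i<3. a i * b i)
        + 29/54 * (\<Sum>i\<in>{3..<6}. a i * b i)
        + 5/6 * (\<Sum>i\<in>{6..<14}. a i * b i))"
  using u0v0_ZS ricci_pos ricci_formula by blast

end
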